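(* For every integer $n\ge1$, $$\log_2(n+1)\le \kappa(n)\le \lceil \log_2(n+1)\rceil .$$ In particular $\kappa(n)=\log_2(n+1)$ whenever $n+1$ is a power of $2$.
   Context: $\Delta_n=\{t=(t_i)_{i=1}^{n+1}: t_i\ge0,\ \sum t_i=1\}$ is the standard $n$-simplex with vertices $e_1,\dots,e_{n+1}$. A function $f:C\to\mathbb{R}$ on a convex set $C$ is approximately convex if $f(tx+(1-t)y)\le tf(x)+(1-t)f(y)+1$ for all $x,y\in C$, $t\in[0,1]$. Let $\mathcal{F}_n$ be the set of all approximately convex $f:\Delta_n\to\mathbb{R}$ with $f(e_i)\le 0$ for $1\le i\le n+1$, and $\kappa(n)=\sup_{f\in\mathcal{F}_n}\sup_{x\in\Delta_n}f(x)$. $\lceil x\rceil$ denotes the least integer $\ge x$. *)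

theory Defs
  imports "HOL-Analysis.Analysis" "HOL-Library.Extended_Real"
begin

text \<open>The standard n-simplex, with points in R^(n+1) represented as functions
  nat => real supported on {0..n} (coordinates indexed 0..n instead of 1..n+1).\<close>
definition std_simplex :: "nat \<Rightarrow> (nat \<Rightarrow> real) set" where
  "std_simplex n = {t. (\<forall>i. 0 \<le> t i) \<and> (\<forall>i>n. t i = 0) \<and> (\<Sum>i\<le>n. t i) = 1}"

definition simplex_vertex :: "nat \<Rightarrow> nat \<Rightarrow> real" where
  "simplex_vertex i = (\<lambda>j. if j = i then 1 else 0)"

definition approx_convex_on :: "(nat \<Rightarrow> real) set \<Rightarrow> ((nat \<Rightarrow> real) \<Rightarrow> real) \<Rightarrow> bool" where
  "approx_convex_on C f \<longleftrightarrow>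
     (\<forall>x\<in>C. \<forall>y\<in>C. \<forall>t::real. 0 \<le> t \<and> t \<le> 1 \<longrightarrow>
        f (\<lambda>i. t * x i + (1 - t) * y i) \<le> t * f x + (1 - t) * f y + 1)"

definition F_class :: "nat \<Rightarrow> ((nat \<Rightarrow> real) \<Rightarrow> real) set" where
  "F_class n = {f. approx_convex_on (std_simplex n) f \<and> (\<forall>i\<le>n. f (simplex_vertex i) \<le> 0)}"

text \<open>kappa(n) as a supremum in the extended reals (so it is a priori well defined).\<close>
definition kappa :: "nat \<Rightarrow> ereal" where
  "kappa n = (SUP f\<in>F_class n. SUP x\<in>std_simplex n. ereal (f x))"

end

theory Submission
  imports Defs
begin

lemma xlnx_split:
  fixes t a :: real
  assumes "t > 0" "a \<ge> 0"
  shows "(t*a) * ln (t*a) = t * (a * ln a) + a * (t * ln t)"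
proof (cases "a = 0")
  case True then show ?thesis by simp
next
  case False
  then have "a > 0" using assms by simp
  then show ?thesis using assms by (simp add: ln_mult_pos algebra_simps)
qed

lemma xlnx_super:
  fixes p q :: real
  assumes "p \<ge> 0" "q \<ge> 0"
  shows "p * ln p + q * ln q \<le> (p+q) * ln (p+q)"
proof (cases "p = 0 \<or> q = 0")
  case True then show ?thesis by auto
next
  case False
  then have pq: "p > 0" "q > 0" using assms by auto
  have "ln p \<le> ln (p+q)" "ln q \<le> ln (p+q)" using pq by auto
  then have "p * ln p \<le> p * ln (p+q)" "q * ln q \<le> q * ln (p+q)"
    using pq by (auto intro: mult_left_mono)
  then show ?thesis by (simp add: algebra_simps)
qed

lemma binent:
  fixes t :: real
  assumes "0 < t" "t < 1"
  shows "- (t * ln t + (1-t) * ln (1-t)) \<le> ln 2"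
proof -
  have a: "ln (1/(2*t)) \<le> 1/(2*t) - 1" using assms by (intro ln_le_minus_one) simp
  have b: "ln (1/(2*(1-t))) \<le> 1/(2*(1-t)) - 1" using assms by (intro ln_le_minus_one) simp
  have a': "ln (1/(2*t)) = - ln 2 - ln t" using assms by (simp add: ln_div ln_mult_pos)
  have b'': "ln (2*(1-t)) = ln 2 + ln (1-t)" using assms by (intro ln_mult_pos) auto
  have b': "ln (1/(2*(1-t))) = - ln 2 - ln (1-t)" using assms b'' by (simp add: ln_div del: ln_mult_pos)
  have e1: "t * (- ln 2 - ln t) \<le> t * (1/(2*t) - 1)" using a a' assms by (intro mult_left_mono) auto
  have e2: "(1-t) * (- ln 2 - ln (1-t)) \<le> (1-t) * (1/(2*(1-t)) - 1)" using b b' assms by (intro mult_left_mono) auto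
  have e3: "t * (1/(2*t) - 1) = 1/2 - t" using assms by (simp add: field_simps)
  have e4: "(1-t) * (1/(2*(1-t)) - 1) = t - 1/2" using assms by (simp add: field_simps)
  have "t * (- ln 2 - ln t) + (1-t) * (- ln 2 - ln (1-t)) \<le> 0" using e1 e2 e3 e4 by linarith
  then show ?thesis by (simp add: algebra_simps)
qed

definition H :: "nat \<Rightarrow> (nat \<Rightarrow> real) \<Rightarrow> real" where
  "H n x = - (\<Sum>i\<le>n. x i * ln (x i)) / ln 2"

lemma H_mix:
  assumes a: "a \<in> std_simplex n" and b: "b \<in> std_simplex n" and t: "0 < t" "t < 1"
  shows "H n (\<lambda>i. t * a i + (1 - t) * b i) \<le> t * H n a + (1-t) * H n b + 1"
proof -
  have a0: "\<And>i. a i \<ge> 0" and as: "(\<Sum>i\<le>n. a i) = 1" using a by (auto simp: std_simplex_def)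
  have b0: "\<And>i. b i \<ge> 0" and bs: "(\<Sum>i\<le>n. b i) = 1" using b by (auto simp: std_simplex_def)
  have pt: "t * (a i * ln (a i)) + a i * (t * ln t) + ((1-t) * (b i * ln (b i)) + b i * ((1-t) * ln (1-t)))
      \<le> (t * a i + (1 - t) * b i) * ln (t * a i + (1 - t) * b i)" for i
  proof -
    have "(t*a i) * ln (t*a i) + ((1-t)*b i) * ln ((1-t)*b i) \<le> (t * a i + (1 - t) * b i) * ln (t * a i + (1 - t) * b i)"
      using a0[of i] b0[of i] t by (intro xlnx_super) auto
    moreover have "(t*a i) * ln (t*a i) = t * (a i * ln (a i)) + a i * (t * ln t)"
      using t a0 by (intro xlnx_split) auto
    moreover have "((1-t)*b i) * ln ((1-t)*b i) = (1-t) * (b i * ln (b i)) + b i * ((1-t) * ln (1-t))"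
      using t b0 by (intro xlnx_split) auto
    ultimately show ?thesis by simp
  qed
  have "(\<Sum>i\<le>n. t * (a i * ln (a i)) + a i * (t * ln t) + ((1-t) * (b i * ln (b i)) + b i * ((1-t) * ln (1-t))))
      \<le> (\<Sum>i\<le>n. (t * a i + (1 - t) * b i) * ln (t * a i + (1 - t) * b i))"
    by (intro sum_mono pt)
  also have "(\<Sum>i\<le>n. t * (a i * ln (a i)) + a i * (t * ln t) + ((1-t) * (b i * ln (b i)) + b i * ((1-t) * ln (1-t))))
      = t * (\<Sum>i\<le>n. a i * ln (a i)) + (\<Sum>i\<le>n. a i) * (t * ln t) + ((1-t) * (\<Sum>i\<le>n. b i * ln (b i)) + (\<Sum>i\<le>n. b i) * ((1-t) * ln (1-t)))"
    by (simp add: sum.distrib sum_distrib_left sum_distrib_right)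
  finally have S: "t * (\<Sum>i\<le>n. a i * ln (a i)) + (t * ln t + (1-t) * ln (1-t)) + (1-t) * (\<Sum>i\<le>n. b i * ln (b i))
      \<le> (\<Sum>i\<le>n. (t * a i + (1 - t) * b i) * ln (t * a i + (1 - t) * b i))"
    using as bs by simp
  have be: "- (t * ln t + (1-t) * ln (1-t)) \<le> ln 2" using binent t by blast
  have l2: "ln (2::real) > 0" by simp
  have "- (\<Sum>i\<le>n. (t * a i + (1 - t) * b i) * ln (t * a i + (1 - t) * b i))
      \<le> t * (- (\<Sum>i\<le>n. a i * ln (a i))) + (1-t) * (- (\<Sum>i\<le>n. b i * ln (b i))) + ln 2"
    using S be by (simp add: algebra_simps)
  then have "- (\<Sum>i\<le>n. (t * a i + (1 - t) * b i) * ln (t * a i + (1 - t) * b i)) / ln 2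
      \<le> (t * (- (\<Sum>i\<le>n. a i * ln (a i))) + (1-t) * (- (\<Sum>i\<le>n. b i * ln (b i))) + ln 2) / ln 2"
    using l2 by (intro divide_right_mono) auto
  also have "\<dots> = t * H n a + (1-t) * H n b + 1"
    using l2 by (simp add: H_def field_simps)
  finally show ?thesis by (simp add: H_def)
qed

lemma H_in_F: "H n \<in> F_class n"
proof -
  have "approx_convex_on (std_simplex n) (H n)"
    unfolding approx_convex_on_def
  proof (intro ballI allI impI)
    fix x y and t :: real assume x: "x \<in> std_simplex n" and y: "y \<in> std_simplex n" and t: "0 \<le> t \<and> t \<le> 1"
    show "H n (\<lambda>i. t * x i + (1 - t) * y i) \<le> t * H n x + (1 - t) * H n y + 1"
    proof (cases "t = 0 \<or> t = 1")
      case True then show ?thesis by auto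
    next
      case False then show ?thesis using t H_mix[OF x y] by auto
    qed
  qed
  moreover have "H n (simplex_vertex i) \<le> 0" for i
  proof -
    have "(\<Sum>j\<le>n. simplex_vertex i j * ln (simplex_vertex i j)) = 0"
      by (intro sum.neutral) (simp add: simplex_vertex_def)
    then show ?thesis unfolding H_def by simp
  qed
  ultimately show ?thesis by (simp add: F_class_def)
qed

lemma lower: "ereal (log 2 (real n + 1)) \<le> kappa n"
proof -
  define c where "c = (\<lambda>i::nat. if i \<le> n then 1 / (real n + 1) else 0)"
  have cS: "c \<in> std_simplex n" unfolding std_simplex_def c_def by auto
  have s1: "(\<Sum>i\<le>n. c i * ln (c i)) = (\<Sum>i\<le>n. 1/(real n+1) * ln (1/(real n+1)))"
    by (intro sum.cong) (auto simp: c_def)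
  have s2: "(\<Sum>i\<le>n. 1/(real n+1) * ln (1/(real n+1))) = ln (1/(real n+1))"
    by (simp add: field_simps)
  have s3: "ln (1/(real n+1)) = - ln (real n + 1)" by (simp add: ln_div)
  have Hc: "H n c = log 2 (real n + 1)"
    proof -
    have "(\<Sum>i\<le>n. c i * ln (c i)) = - ln (real n + 1)" using s1 s2 s3 by simp
    then show ?thesis unfolding H_def log_def by simp
  qed
  have "ereal (H n c) \<le> (SUP x\<in>std_simplex n. ereal (H n x))"
    using cS by (rule SUP_upper)
  also have "\<dots> \<le> kappa n" unfolding kappa_def using H_in_F by (rule SUP_upper)
  finally show ?thesis using Hc by simp
qed

lemma sum_support:
  fixes n :: nat
  assumes "S \<subseteq> {..n}" "\<forall>i. i \<notin> S \<longrightarrow> x i = 0"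
  shows "(\<Sum>i\<le>n. x i) = (\<Sum>i\<in>S. (x i::real))"
  using assms finite_atMost[of n] by (intro sum.mono_neutral_right) auto

lemma restrict_simplex:
  assumes x: "x \<in> std_simplex n" and A: "A \<subseteq> {..n}" and s: "s = (\<Sum>i\<in>A. x i)" "s > 0"
  shows "(\<lambda>i. if i \<in> A then x i / s else 0) \<in> std_simplex n"
proof -
  have x0: "\<And>i. x i \<ge> 0" using x by (auto simp: std_simplex_def)
  have "(\<Sum>i\<le>n. (if i \<in> A then x i / s else 0)) = (\<Sum>i\<in>A. (if i \<in> A then x i / s else 0))"
    using A by (intro sum_support) auto
  also have "\<dots> = (\<Sum>i\<in>A. x i / s)" by (intro sum.cong) auto
  also have "\<dots> = (\<Sum>i\<in>A. x i) / s" by (simp add: sum_divide_distrib)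
  also have "\<dots> = s / s" using s by simp
  also have "\<dots> = 1" using s by simp
  finally show ?thesis using x0 s A unfolding std_simplex_def by auto
qed

lemma upper_aux:
  assumes f: "f \<in> F_class n"
  shows "\<forall>S x. S \<subseteq> {..n} \<and> card S \<le> 2^k \<and> x \<in> std_simplex n \<and> (\<forall>i. i \<notin> S \<longrightarrow> x i = 0)
           \<longrightarrow> f x \<le> real k"
proof (induction k)
  case 0
  show ?case
  proof (intro allI impI)
    fix S x assume h: "S \<subseteq> {..n} \<and> card S \<le> 2^0 \<and> x \<in> std_simplex n \<and> (\<forall>i. i \<notin> S \<longrightarrow> x i = 0)"
    have fin: "finite S" using h finite_subset by blast
    have sx: "(\<Sum>i\<in>S. x i) = 1" using h sum_support[of S n x] by (auto simp: std_simplex_def)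
    have "S \<noteq> {}" using sx by auto
    then obtain j where Sj: "S = {j}" using h fin by (metis One_nat_def card_1_singletonE card_0_eq le_Suc_eq power_0 le_zero_eq)
    have "x = simplex_vertex j"
    proof
      fix i show "x i = simplex_vertex j i"
        using h sx Sj by (auto simp: simplex_vertex_def)
    qed
    moreover have "j \<le> n" using h Sj by auto
    ultimately show "f x \<le> real 0" using f by (auto simp: F_class_def)
  qed
next
  case (Suc k)
  have ac: "approx_convex_on (std_simplex n) f" using f by (simp add: F_class_def)
  show ?case
  proof (intro allI impI)
    fix S x assume h: "S \<subseteq> {..n} \<and> card S \<le> 2^Suc k \<and> x \<in> std_simplex n \<and> (\<forall>i. i \<notin> S \<longrightarrow> x i = 0)"
    have fin: "finite S" using h finite_subset by blast
    have x: "x \<in> std_simplex n" using h by blast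
    have x0: "\<And>i. x i \<ge> 0" using x by (auto simp: std_simplex_def)
    have sx: "(\<Sum>i\<in>S. x i) = 1" using h sum_support[of S n x] by (auto simp: std_simplex_def)
    show "f x \<le> real (Suc k)"
    proof (cases "card S \<le> 2^k")
      case True
      then have "f x \<le> real k" using Suc.IH h by blast
      then show ?thesis by simp
    next
      case False
      then obtain A where A: "A \<subseteq> S" "card A = 2^k" "finite A"
        by (meson nle_le obtain_subset_with_card_n)
      define B where "B = S - A"
      have cB: "card B \<le> 2^k" unfolding B_def using A fin h by (simp add: card_Diff_subset) linarith
      define s where "s = (\<Sum>i\<in>A. x i)"
      have sAB: "(\<Sum>i\<in>S. x i) = s + (\<Sum>i\<in>B. x i)"
        unfolding s_def B_def using A fin by (metis add.commute sum.subset_diff)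
      have sB: "(\<Sum>i\<in>B. x i) = 1 - s" using sAB sx by simp
      have s0: "s \<ge> 0" unfolding s_def using x0 by (simp add: sum_nonneg)
      have s1: "1 - s \<ge> 0" using sB x0 by (metis sum_nonneg)
      have AS: "A \<subseteq> {..n}" "B \<subseteq> {..n}" using A h unfolding B_def by auto
      have finB: "finite B" using fin B_def by simp
      consider "s = 0" | "s = 1" | "0 < s \<and> s < 1" using s0 s1 by linarith
      then show ?thesis
      proof cases
        case 1
        have "\<forall>i\<in>A. x i = 0" using 1 A x0 unfolding s_def by (simp add: sum_nonneg_eq_0_iff)
        then have "\<forall>i. i \<notin> B \<longrightarrow> x i = 0" using h unfolding B_def by auto
        then have "f x \<le> real k" using Suc.IH[rule_format, of B x] AS cB x by simp
        then show ?thesis by simp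
      next
        case 2
        have "\<forall>i\<in>B. x i = 0" using 2 sB finB x0 by (simp add: sum_nonneg_eq_0_iff)
        then have "\<forall>i. i \<notin> A \<longrightarrow> x i = 0" using h unfolding B_def by auto
        then have "f x \<le> real k" using Suc.IH[rule_format, of A x] AS A x by simp
        then show ?thesis by simp
      next
        case 3
        define y where "y = (\<lambda>i. if i \<in> A then x i / s else 0)"
        define z where "z = (\<lambda>i. if i \<in> B then x i / (1 - s) else 0)"
        have y: "y \<in> std_simplex n" unfolding y_def using restrict_simplex[OF x AS(1) s_def] 3 by blast
        have z: "z \<in> std_simplex n" unfolding z_def using restrict_simplex[OF x AS(2) sB[symmetric]] 3 by simp
        have fy: "f y \<le> real k"
          using Suc.IH[rule_format, of A y] AS A y unfolding y_def by auto
        have fz: "f z \<le> real k"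
          using Suc.IH[rule_format, of B z] AS cB z unfolding z_def by auto
        have xe: "x = (\<lambda>i. s * y i + (1 - s) * z i)"
        proof
          fix i show "x i = s * y i + (1 - s) * z i"
            using 3 h unfolding y_def z_def B_def by auto
        qed
        have "f x \<le> s * f y + (1 - s) * f z + 1"
          using ac y z 3 unfolding approx_convex_on_def xe by auto
        also have "\<dots> \<le> s * real k + (1 - s) * real k + 1"
          using fy fz 3 by (intro add_mono mult_left_mono) auto
        finally show ?thesis by (simp add: algebra_simps)
      qed
    qed
  qed
qed

lemma upper_nat:
  assumes "n + 1 \<le> 2^k"
  shows "kappa n \<le> ereal (real k)"
  unfolding kappa_def
proof (intro SUP_least)
  fix f x assume f: "f \<in> F_class n" and x: "x \<in> std_simplex n"
  have "f x \<le> real k"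
    using upper_aux[OF f, of k, rule_format, of "{..n}" x] assms x
    by (auto simp: std_simplex_def not_le)
  then show "ereal (f x) \<le> ereal (real k)" by simp
qed

lemma upper: "kappa n \<le> ereal (real_of_int \<lceil>log 2 (real n + 1)\<rceil>)"
proof -
  define k where "k = nat \<lceil>log 2 (real n + 1)\<rceil>"
  have lg: "log 2 (real n + 1) \<ge> 0" by simp
  then have kk: "real k = real_of_int \<lceil>log 2 (real n + 1)\<rceil>" unfolding k_def by simp
  have "real n + 1 = 2 powr log 2 (real n + 1)" by simp
  also have "\<dots> \<le> 2 powr real k" using kk by (intro powr_mono) auto
  also have "\<dots> = 2 ^ k" by (simp add: powr_realpow)
  finally have "real (n + 1) \<le> real (2^k)" by simp
  then have "n + 1 \<le> 2^k" by linarith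
  then have "kappa n \<le> ereal (real k)" by (rule upper_nat)
  then show ?thesis using kk by simp
qed

theorem mainTheorem2:
  fixes n :: nat
  assumes "n \<ge> 1"
  shows "ereal (log 2 (real n + 1)) \<le> kappa n
       \<and> kappa n \<le> ereal (real_of_int \<lceil>log 2 (real n + 1)\<rceil>)
       \<and> (\<forall>k::nat. n + 1 = 2 ^ k \<longrightarrow> kappa n = ereal (log 2 (real n + 1)))"
proof (intro conjI allI impI)
  show "ereal (log 2 (real n + 1)) \<le> kappa n" by (rule lower)
  show "kappa n \<le> ereal (real_of_int \<lceil>log 2 (real n + 1)\<rceil>)" by (rule upper)
  fix k :: nat assume k: "n + 1 = 2 ^ k"
  have "real n + 1 = 2 ^ k" using k by (metis of_nat_1 of_nat_add of_nat_numeral of_nat_power)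
  then have lk: "log 2 (real n + 1) = real k" by simp
  have "kappa n \<le> ereal (real_of_int \<lceil>log 2 (real n + 1)\<rceil>)" by (rule upper)
  then have "kappa n \<le> ereal (real k)" unfolding lk by simp
  moreover have "ereal (log 2 (real n + 1)) \<le> kappa n" by (rule lower)
  then have "ereal (real k) \<le> kappa n" unfolding lk .
  ultimately show "kappa n = ereal (log 2 (real n + 1))" using lk by simp
qed

end
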